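(* Let $\pi$ be a probability measure on $\mathsf{X}$, and for each $x\in\mathsf{X}$ let $Q_{x}$ be the law of a random variable $W=\prod_{t=1}^{T}W_{t}$, where $W_{1},\dots,W_{T}$ are independent and nonnegative and each $W_{t}=\frac{1}{N}\sum_{i=1}^{N}W_{t,i}$ is an average of nonnegative, independent and identically distributed random variables $W_{t,1},\dots,W_{t,N}$ with mean $1$ (their laws may depend on $x$). Let $\tilde{\pi}_{x}(\mathrm{d}w):=wQ_{x}(\mathrm{d}w)$. Assume that for some integer $p\ge2$ and every $x\in\mathsf{X}$, $\max_{t\in\{1,\dots,T\}}\mathbb{E}[W_{t,1}^{p}]<\infty$. Then there exists a function $M_{p}:\mathsf{X}\to\mathbb{R}_{+}$ such that if \[ N\ge\alpha T+\tfrac{1}{2}+\sqrt{\alpha T} \] for some $\alpha>0$, then for all $s>0$, \[ \int\pi(\mathrm{d}x)\,\tilde{\pi}_{x}(W\ge s)\le s^{-p+1}\int\pi(\mathrm{d}x)\exp\Big(\frac{M_{p}(x)}{\alpha}\Big). \]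
   Context: $\mathbb{R}_{+}=(0,\infty)$. The expectation $\mathbb{E}[W_{t,1}^{p}]$ is under the law determined by $x$. *)

theory Defs
  imports "HOL-Probability.Probability"
begin

definition W_prod :: "nat \<Rightarrow> nat \<Rightarrow> (nat \<times> nat \<Rightarrow> real) \<Rightarrow> real" where
  "W_prod T N \<omega> = (\<Prod>t\<in>{1..T}. (\<Sum>i<N. \<omega> (t, i)) / real N)"

definition Q_law :: "('x \<Rightarrow> nat \<Rightarrow> real measure) \<Rightarrow> nat \<Rightarrow> nat \<Rightarrow> 'x \<Rightarrow> real measure" where
  "Q_law \<mu> T N x = distr (PiM ({1..T} \<times> {..<N}) (\<lambda>(t, i). \<mu> x t)) borel (W_prod T N)"

definition tilde_pi :: "('x \<Rightarrow> nat \<Rightarrow> real measure) \<Rightarrow> nat \<Rightarrow> nat \<Rightarrow> 'x \<Rightarrow> real set \<Rightarrow> ennreal" where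
  "tilde_pi \<mu> T N x A = (\<integral>\<^sup>+ w\<in>A. ennreal w \<partial>(Q_law \<mu> T N x))"

end

theory Submission
  imports Defs
begin


fun Kc :: "real \<Rightarrow> nat \<Rightarrow> real" where
  "Kc B 0 = 0"
| "Kc B (Suc j) = real (Suc j) * Kc B j + B * 2 ^ Suc j * (1 + Kc B j)"

definition bd :: "real \<Rightarrow> nat \<Rightarrow> nat \<Rightarrow> real" where
  "bd B j n = real n ^ j + Kc B j * (real n + 1) ^ (j - 1)"

definition mb :: "real \<Rightarrow> nat \<Rightarrow> real" where
  "mb B i = (if i \<le> 1 then 1 else B)"

lemma Kc_nonneg: "B \<ge> 0 \<Longrightarrow> Kc B j \<ge> 0"
  by (induction j) auto

lemma Kc_Suc_ge: "B \<ge> 0 \<Longrightarrow> Kc B j \<le> Kc B (Suc j)"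
proof -
  assume B: "B \<ge> 0"
  have "Kc B j \<le> real (Suc j) * Kc B j" using Kc_nonneg[OF B, of j]
    by (simp add: mult_le_cancel_right1) 
  also have "\<dots> \<le> Kc B (Suc j)" using Kc_nonneg[OF B, of j] B by simp
  finally show ?thesis .
qed

lemma Kc_mono: "B \<ge> 0 \<Longrightarrow> k \<le> j \<Longrightarrow> Kc B k \<le> Kc B j"
proof (induction j)
  case (Suc j)
  show ?case
  proof (cases "k = Suc j")
    case False
    then have "Kc B k \<le> Kc B j" using Suc by simp
    then show ?thesis using Kc_Suc_ge[OF Suc.prems(1), of j] by linarith
  qed simp
qed simp

lemma pow_Suc_bern: "(x::real) \<ge> 0 \<Longrightarrow> x ^ Suc k + real (Suc k) * x ^ k \<le> (x + 1) ^ Suc k"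
proof (induction k)
  case 0 then show ?case by simp
next
  case (Suc k)
  have "x ^ Suc (Suc k) + real (Suc (Suc k)) * x ^ Suc k
      \<le> (x + 1) * (x ^ Suc k + real (Suc k) * x ^ k)"
    using Suc.prems by (simp add: algebra_simps)
  also have "\<dots> \<le> (x + 1) * (x + 1) ^ Suc k"
    using Suc by (intro mult_left_mono) auto
  finally show ?case by simp
qed

lemma bd_le: "B \<ge> 0 \<Longrightarrow> k \<le> m \<Longrightarrow> bd B k n \<le> (1 + Kc B m) * (real n + 1) ^ m"
proof -
  assume B: "B \<ge> 0" and km: "k \<le> m"
  have a: "real n ^ k \<le> (real n + 1) ^ m"
    by (rule order_trans[of _ "(real n + 1) ^ k"]) (auto intro: power_mono power_increasing km)
  have b: "(real n + 1) ^ (k - 1) \<le> (real n + 1) ^ m"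
    by (rule power_increasing) (use km in auto)
  have "Kc B k * (real n + 1) ^ (k - 1) \<le> Kc B m * (real n + 1) ^ m"
    by (intro mult_mono b Kc_mono B km Kc_nonneg) auto
  with a show ?thesis unfolding bd_def by (simp add: algebra_simps)
qed

lemma lin_helper:
  fixes s b2 c b1 l L X2 K2 P1 X1 K1 P Q R :: real
  assumes "s = b2 + cb1 + l" "l \<le> L" "b2 = X2 + K2 * P1" "cb1 = c * X1 + c * K1 * P"
    "K2 * P = c * K1 * P + L" "K2 * (P1 + P) \<le> K2 * Q" "X2 + c * X1 \<le> R"
  shows "s \<le> R + K2 * Q"
proof -
  have "K2 * (P1 + P) = K2 * P1 + K2 * P" by (simp add: algebra_simps)
  then show ?thesis using assms by linarith
qed

lemma real_step:
  assumes B: "B \<ge> 1"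
  shows "(\<Sum>k\<le>j. real (j choose k) * bd B k n * mb B (j - k)) \<le> bd B j (Suc n)"
proof (cases j)
  case 0 then show ?thesis by (simp add: bd_def mb_def)
next
  case (Suc j')
  show ?thesis
  proof (cases j')
    case 0 then show ?thesis using Suc by (simp add: bd_def mb_def)
  next
    case (Suc m)
    have j: "j = Suc (Suc m)" using Suc \<open>j = Suc j'\<close> by simp
    define x where "x = real n"
    have x0: "x \<ge> 0" by (simp add: x_def)
    define K1 where "K1 = Kc B (Suc m)"
    have K1: "K1 \<ge> 0" unfolding K1_def using B Kc_nonneg by simp
    have split: "{..j} = insert (Suc (Suc m)) (insert (Suc m) {..m})" using j by auto
    have low: "(\<Sum>k\<le>m. real (j choose k) * bd B k n * mb B (j - k))
        \<le> (\<Sum>k\<le>m. real (j choose k) * (B * ((1 + K1) * (x + 1) ^ m)))"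
    proof (rule sum_mono)
      fix k assume k: "k \<in> {..m}"
      have mbB: "mb B (j - k) = B" using k j by (auto simp: mb_def)
      have bdle: "bd B k n \<le> (1 + K1) * (x + 1) ^ m"
        unfolding K1_def x_def
        by (rule order_trans[OF bd_le[of B k m]]) (use B k Kc_Suc_ge[of B m] in \<open>auto intro!: mult_right_mono simp del: Kc.simps\<close>)
      show "real (j choose k) * bd B k n * mb B (j - k)
          \<le> real (j choose k) * (B * ((1 + K1) * (x + 1) ^ m))"
      proof -
        have "bd B k n * B \<le> (1 + K1) * (x + 1) ^ m * B"
          by (rule mult_right_mono) (use bdle B in auto)
        then have "real (j choose k) * (bd B k n * B) \<le> real (j choose k) * ((1 + K1) * (x + 1) ^ m * B)"
          by (rule mult_left_mono) simp
        then show ?thesis using mbB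
          by (simp only: mult.assoc mult.commute mult.left_commute)
      qed
    qed
    also have "\<dots> = (\<Sum>k\<le>m. real (j choose k)) * (B * ((1 + K1) * (x + 1) ^ m))"
      by (simp add: sum_distrib_right)
    also have "\<dots> \<le> 2 ^ j * (B * ((1 + K1) * (x + 1) ^ m))"
    proof (rule mult_right_mono)
      have "(\<Sum>k\<le>m. real (j choose k)) \<le> (\<Sum>k\<le>j. real (j choose k))"
        by (rule sum_mono2) (use j in auto)
      also have "\<dots> = 2 ^ j" using choose_row_sum[of j]
        by (metis of_nat_numeral of_nat_power of_nat_sum)
      finally show "(\<Sum>k\<le>m. real (j choose k)) \<le> 2 ^ j" .
    qed (use B K1 x0 in auto)
    finally have low': "(\<Sum>k\<le>m. real (j choose k) * bd B k n * mb B (j - k))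
        \<le> 2 ^ j * (B * ((1 + K1) * (x + 1) ^ m))" .
    have sumeq: "(\<Sum>k\<le>j. real (j choose k) * bd B k n * mb B (j - k))
       = bd B (Suc (Suc m)) n + real (Suc (Suc m)) * bd B (Suc m) n
         + (\<Sum>k\<le>m. real (j choose k) * bd B k n * mb B (j - k))"
      unfolding split using j by (simp add: mb_def)
    have K2: "Kc B (Suc (Suc m)) = real (Suc (Suc m)) * K1 + B * 2 ^ Suc (Suc m) * (1 + K1)"
      by (simp add: K1_def)
    have bern: "x ^ Suc (Suc m) + real (Suc (Suc m)) * x ^ Suc m \<le> (x + 1) ^ Suc (Suc m)"
      by (rule pow_Suc_bern[OF x0])
    have p2: "(x + 1) ^ Suc m + (x + 1) ^ m \<le> (x + 1 + 1) ^ Suc m"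
    proof -
      have "(x + 1) ^ m \<le> (x + 2) ^ m" by (rule power_mono) (use x0 in auto)
      hence "(x + 2) * (x + 1) ^ m \<le> (x + 2) * (x + 2) ^ m"
        by (rule mult_left_mono) (use x0 in auto)
      hence "(x + 1) ^ Suc m + (x + 1) ^ m \<le> (x + 2) * (x + 2) ^ m"
        by (simp add: algebra_simps)
      thus ?thesis by (simp add: add.assoc)
    qed
    have Kpos: "Kc B (Suc (Suc m)) \<ge> 0" using Kc_nonneg B by simp
    have e1: "bd B j (Suc n) = (x + 1) ^ Suc (Suc m) + Kc B (Suc (Suc m)) * (x + 1 + 1) ^ Suc m"
      unfolding bd_def j x_def by (simp add: add.commute)
    have e2: "bd B (Suc (Suc m)) n = x ^ Suc (Suc m) + Kc B (Suc (Suc m)) * (x + 1) ^ Suc m"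
      unfolding bd_def x_def by simp
    have e3: "real (Suc (Suc m)) * bd B (Suc m) n = real (Suc (Suc m)) * x ^ Suc m
         + real (Suc (Suc m)) * K1 * (x + 1) ^ m"
      unfolding bd_def x_def K1_def by (simp add: algebra_simps)
    have e4: "Kc B (Suc (Suc m)) * (x + 1) ^ m = real (Suc (Suc m)) * K1 * (x + 1) ^ m
        + 2 ^ j * (B * ((1 + K1) * (x + 1) ^ m))"
      unfolding K2 j by (simp add: algebra_simps)
    have e5: "Kc B (Suc (Suc m)) * ((x + 1) ^ Suc m + (x + 1) ^ m)
        \<le> Kc B (Suc (Suc m)) * (x + 1 + 1) ^ Suc m"
      by (rule mult_left_mono[OF p2 Kpos])
    show ?thesis
      using lin_helper[OF sumeq low' e2 e3 e4 e5 bern] e1 by simp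
  qed
qed



lemma pointwise_binom:
  fixes S y :: real
  shows "ennreal (\<bar>y + S\<bar> ^ j) \<le> (\<Sum>k\<le>j. ennreal (real (j choose k)) * ennreal (\<bar>S\<bar> ^ k) * ennreal (\<bar>y\<bar> ^ (j - k)))"
proof -
  have "\<bar>y + S\<bar> ^ j \<le> (\<bar>S\<bar> + \<bar>y\<bar>) ^ j"
    by (rule power_mono) auto
  also have "\<dots> = (\<Sum>k\<le>j. real (j choose k) * \<bar>S\<bar> ^ k * \<bar>y\<bar> ^ (j - k))"
    by (rule binomial_ring)
  finally have "ennreal (\<bar>y + S\<bar> ^ j) \<le> ennreal (\<Sum>k\<le>j. real (j choose k) * \<bar>S\<bar> ^ k * \<bar>y\<bar> ^ (j - k))"
    by (rule ennreal_leI)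
  also have "\<dots> = (\<Sum>k\<le>j. ennreal (real (j choose k) * \<bar>S\<bar> ^ k * \<bar>y\<bar> ^ (j - k)))"
    by (rule sum_ennreal[symmetric]) auto
  also have "\<dots> = (\<Sum>k\<le>j. ennreal (real (j choose k)) * ennreal (\<bar>S\<bar> ^ k) * ennreal (\<bar>y\<bar> ^ (j - k)))"
    by (rule sum.cong) (auto simp: ennreal_mult)
  finally show ?thesis .
qed

lemma sum_moment:
  fixes M :: "real measure" and J :: "'i set"
  assumes M: "prob_space M" and sM: "sets M = sets borel" and fin: "finite J" and B: "B \<ge> 1"
    and m1: "(\<integral>\<^sup>+ y. ennreal \<bar>y\<bar> \<partial>M) \<le> 1"
    and mB: "\<And>i. 2 \<le> i \<Longrightarrow> i \<le> p \<Longrightarrow> (\<integral>\<^sup>+ y. ennreal (\<bar>y\<bar> ^ i) \<partial>M) \<le> ennreal B"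
  shows "\<forall>j\<le>p. (\<integral>\<^sup>+ \<omega>. ennreal (\<bar>\<Sum>k\<in>J. \<omega> k\<bar> ^ j) \<partial>PiM J (\<lambda>_. M)) \<le> ennreal (bd B j (card J))"
  using fin
proof (induction J rule: finite_induct)
  case empty
  interpret P: prob_space "PiM {} (\<lambda>_. M)" by (rule prob_space_PiM) (use M in auto)
  show ?case
  proof (intro allI impI)
    fix j assume "j \<le> p"
    have "bd B j 0 \<ge> 0 ^ j" unfolding bd_def using Kc_nonneg[of B j] B by simp
    then show "(\<integral>\<^sup>+ \<omega>. ennreal (\<bar>\<Sum>k\<in>{}. \<omega> k\<bar> ^ j) \<partial>PiM {} (\<lambda>_. M)) \<le> ennreal (bd B j (card {}))"
      by (simp add: P.emeasure_space_1 ennreal_leI)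
  qed
next
  case (insert i F)
  interpret product_sigma_finite "\<lambda>_. M"
    unfolding product_sigma_finite_def using prob_space_imp_sigma_finite[OF M] by simp
  interpret PF: prob_space "PiM F (\<lambda>_. M)" by (rule prob_space_PiM) (use M in auto)
  interpret M: prob_space M by (rule M)
  note [measurable_cong] = sM
  define mm where "mm i = (\<integral>\<^sup>+ y. ennreal (\<bar>y\<bar> ^ i) \<partial>M)" for i
  have mm_le: "mm i \<le> ennreal (mb B i)" if "i \<le> p" for i
  proof -
    consider "i = 0" | "i = 1" | "2 \<le> i" by linarith
    then show ?thesis
    proof cases
      case 1 then show ?thesis by (simp add: mm_def mb_def M.emeasure_space_1)
    next
      case 2 then show ?thesis using m1 by (simp add: mm_def mb_def)
    next
      case 3 then show ?thesis using mB[OF 3 that] by (simp add: mm_def mb_def)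
    qed
  qed
  show ?case
  proof (intro allI impI)
    fix j assume jp: "j \<le> p"
    define S where "S x = (\<Sum>k\<in>F. x k)" for x :: "'i \<Rightarrow> real"
    have Smeas[measurable]: "S \<in> borel_measurable (PiM F (\<lambda>_. M))"
      unfolding S_def by measurable
    have "(\<integral>\<^sup>+ \<omega>. ennreal (\<bar>\<Sum>k\<in>insert i F. \<omega> k\<bar> ^ j) \<partial>PiM (insert i F) (\<lambda>_. M))
        = (\<integral>\<^sup>+ x. (\<integral>\<^sup>+ y. ennreal (\<bar>\<Sum>k\<in>insert i F. (x(i := y)) k\<bar> ^ j) \<partial>M) \<partial>PiM F (\<lambda>_. M))"
      by (rule product_nn_integral_insert) (use insert in auto)
    also have "\<dots> = (\<integral>\<^sup>+ x. (\<integral>\<^sup>+ y. ennreal (\<bar>y + S x\<bar> ^ j) \<partial>M) \<partial>PiM F (\<lambda>_. M))"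
    proof -
      have "(\<Sum>k\<in>insert i F. (x(i := y)) k) = y + S x" for x y
      proof -
        have "(\<Sum>k\<in>F. (x(i := y)) k) = S x" unfolding S_def
          by (rule sum.cong) (use insert in auto)
        then show ?thesis using insert by simp
      qed
      then show ?thesis by simp
    qed
    also have "\<dots> \<le> (\<integral>\<^sup>+ x. (\<Sum>k\<le>j. ennreal (real (j choose k)) * ennreal (\<bar>S x\<bar> ^ k) * mm (j - k)) \<partial>PiM F (\<lambda>_. M))"
    proof (rule nn_integral_mono)
      fix x
      have "(\<integral>\<^sup>+ y. ennreal (\<bar>y + S x\<bar> ^ j) \<partial>M)
          \<le> (\<integral>\<^sup>+ y. (\<Sum>k\<le>j. ennreal (real (j choose k)) * ennreal (\<bar>S x\<bar> ^ k) * ennreal (\<bar>y\<bar> ^ (j - k))) \<partial>M)"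
        by (rule nn_integral_mono) (rule pointwise_binom)
      also have "\<dots> = (\<Sum>k\<le>j. ennreal (real (j choose k)) * ennreal (\<bar>S x\<bar> ^ k) * mm (j - k))"
        by (subst nn_integral_sum) (auto simp: nn_integral_cmult mm_def)
      finally show "(\<integral>\<^sup>+ y. ennreal (\<bar>y + S x\<bar> ^ j) \<partial>M) \<le> (\<Sum>k\<le>j. ennreal (real (j choose k)) * ennreal (\<bar>S x\<bar> ^ k) * mm (j - k))" .
    qed
    also have "\<dots> = (\<Sum>k\<le>j. (\<integral>\<^sup>+ x. ennreal (real (j choose k)) * ennreal (\<bar>S x\<bar> ^ k) * mm (j - k) \<partial>PiM F (\<lambda>_. M)))"
      by (rule nn_integral_sum) measurable
    also have "\<dots> = (\<Sum>k\<le>j. ennreal (real (j choose k)) * mm (j - k) * (\<integral>\<^sup>+ x. ennreal (\<bar>S x\<bar> ^ k) \<partial>PiM F (\<lambda>_. M)))"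
    proof (rule sum.cong[OF refl])
      fix k
      have "(\<integral>\<^sup>+ x. ennreal (real (j choose k)) * ennreal (\<bar>S x\<bar> ^ k) * mm (j - k) \<partial>PiM F (\<lambda>_. M))
        = ennreal (real (j choose k)) * (\<integral>\<^sup>+ x. ennreal (\<bar>S x\<bar> ^ k) \<partial>PiM F (\<lambda>_. M)) * mm (j - k)"
        by (simp add: nn_integral_cmult nn_integral_multc)
      then show "(\<integral>\<^sup>+ x. ennreal (real (j choose k)) * ennreal (\<bar>S x\<bar> ^ k) * mm (j - k) \<partial>PiM F (\<lambda>_. M))
        = ennreal (real (j choose k)) * mm (j - k) * (\<integral>\<^sup>+ x. ennreal (\<bar>S x\<bar> ^ k) \<partial>PiM F (\<lambda>_. M))"
        by (simp add: ac_simps)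
    qed
    also have "\<dots> \<le> (\<Sum>k\<le>j. ennreal (real (j choose k)) * ennreal (mb B (j - k)) * ennreal (bd B k (card F)))"
    proof (rule sum_mono)
      fix k assume k: "k \<in> {..j}"
      have "(\<integral>\<^sup>+ x. ennreal (\<bar>S x\<bar> ^ k) \<partial>PiM F (\<lambda>_. M)) \<le> ennreal (bd B k (card F))"
        using insert.IH k jp unfolding S_def by auto
      moreover have "mm (j - k) \<le> ennreal (mb B (j - k))" by (rule mm_le) (use jp in auto)
      ultimately show "ennreal (real (j choose k)) * mm (j - k) * (\<integral>\<^sup>+ x. ennreal (\<bar>S x\<bar> ^ k) \<partial>PiM F (\<lambda>_. M))
          \<le> ennreal (real (j choose k)) * ennreal (mb B (j - k)) * ennreal (bd B k (card F))"
        by (intro mult_mono) auto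
    qed
    also have "\<dots> = ennreal (\<Sum>k\<le>j. real (j choose k) * bd B k (card F) * mb B (j - k))"
    proof -
      have nn: "0 \<le> bd B k n" for k n unfolding bd_def using Kc_nonneg[of B k] B by simp
      have nm: "0 \<le> mb B k" for k using B by (simp add: mb_def)
      show ?thesis
        by (subst sum_ennreal[symmetric]) (auto intro!: sum.cong simp: nn nm ennreal_mult mult.commute mult.left_commute)
    qed
    also have "\<dots> \<le> ennreal (bd B j (Suc (card F)))"
      by (rule ennreal_leI) (rule real_step[OF B])
    finally show "(\<integral>\<^sup>+ \<omega>. ennreal (\<bar>\<Sum>k\<in>insert i F. \<omega> k\<bar> ^ j) \<partial>PiM (insert i F) (\<lambda>_. M)) \<le> ennreal (bd B j (card (insert i F)))"
      using insert by simp
  qed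
qed



lemma block_prod:
  fixes M' :: "nat \<times> nat \<Rightarrow> real measure" and F J :: "nat set" and c :: real and p :: nat
  assumes ps: "\<And>k. prob_space (M' k)" and sM: "\<And>k. sets (M' k) = sets borel"
    and finF: "finite F" and finJ: "finite J"
  shows "(\<integral>\<^sup>+\<omega>. (\<Prod>t\<in>F. ennreal (\<bar>(\<Sum>i\<in>J. \<omega> (t, i)) / c\<bar> ^ p)) \<partial>PiM (F \<times> J) M')
       = (\<Prod>t\<in>F. \<integral>\<^sup>+\<omega>. ennreal (\<bar>(\<Sum>i\<in>J. \<omega> (t, i)) / c\<bar> ^ p) \<partial>PiM ({t} \<times> J) M')"
  using finF
proof (induction F rule: finite_induct)
  case empty
  interpret P: prob_space "PiM {} M'" by (rule prob_space_PiM) (use ps in auto)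
  show ?case by (simp add: P.emeasure_space_1)
next
  case (insert t F)
  interpret product_sigma_finite M'
    unfolding product_sigma_finite_def using prob_space_imp_sigma_finite[OF ps] by simp
  note [measurable_cong] = sM
  define h where "h t' \<omega> = ennreal (\<bar>(\<Sum>i\<in>J. \<omega> (t', i)) / c\<bar> ^ p)" for t' and \<omega> :: "nat \<times> nat \<Rightarrow> real"
  have hmeas[measurable]: "h t' \<in> borel_measurable (PiM I M')" if sub: "{t'} \<times> J \<subseteq> I" for t' I
  proof -
    have [measurable]: "(\<lambda>\<omega>. \<omega> (t', i)) \<in> borel_measurable (PiM I M')" if "i \<in> J" for i
      by measurable (use that sub in auto)
    show ?thesis unfolding h_def by measurable
  qed
  have eqset: "insert t F \<times> J = (F \<times> J) \<union> ({t} \<times> J)" by auto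
  have disj: "(F \<times> J) \<inter> ({t} \<times> J) = {}" using insert by auto
  have "(\<integral>\<^sup>+\<omega>. (\<Prod>t'\<in>insert t F. h t' \<omega>) \<partial>PiM (insert t F \<times> J) M')
      = (\<integral>\<^sup>+\<omega>. (\<Prod>t'\<in>insert t F. h t' \<omega>) \<partial>PiM ((F \<times> J) \<union> ({t} \<times> J)) M')"
    unfolding eqset ..
  also have "\<dots> = (\<integral>\<^sup>+ x. (\<integral>\<^sup>+ y. (\<Prod>t'\<in>insert t F. h t' (merge (F \<times> J) ({t} \<times> J) (x, y))) \<partial>PiM ({t} \<times> J) M') \<partial>PiM (F \<times> J) M')"
  proof (rule product_nn_integral_fold)
    show "(\<lambda>\<omega>. \<Prod>t'\<in>insert t F. h t' \<omega>) \<in> borel_measurable (PiM ((F \<times> J) \<union> ({t} \<times> J)) M')"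
    proof (rule borel_measurable_prod_ennreal)
      fix t' assume "t' \<in> insert t F"
      then show "h t' \<in> borel_measurable (PiM ((F \<times> J) \<union> ({t} \<times> J)) M')"
        by (intro hmeas) auto
    qed
  qed (use disj insert finJ in auto)
  also have "\<dots> = (\<integral>\<^sup>+ x. (\<integral>\<^sup>+ y. h t y * (\<Prod>t'\<in>F. h t' x) \<partial>PiM ({t} \<times> J) M') \<partial>PiM (F \<times> J) M')"
  proof -
    have "h t (merge (F \<times> J) ({t} \<times> J) (x, y)) = h t y" for x y
      unfolding h_def using insert by (auto intro!: sum.cong arg_cong[where f = "\<lambda>z. ennreal (\<bar>z / c\<bar> ^ p)"] simp: merge_def)
    moreover have "h t' (merge (F \<times> J) ({t} \<times> J) (x, y)) = h t' x" if "t' \<in> F" for x y t'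
      unfolding h_def using that by (auto intro!: sum.cong arg_cong[where f = "\<lambda>z. ennreal (\<bar>z / c\<bar> ^ p)"] simp: merge_def)
    ultimately show ?thesis using insert by (simp cong: prod.cong)
  qed
  also have "\<dots> = (\<integral>\<^sup>+ x. (\<integral>\<^sup>+ y. h t y \<partial>PiM ({t} \<times> J) M') * (\<Prod>t'\<in>F. h t' x) \<partial>PiM (F \<times> J) M')"
    by (rule nn_integral_cong) (rule nn_integral_multc, rule hmeas, simp)
  also have "\<dots> = (\<integral>\<^sup>+ y. h t y \<partial>PiM ({t} \<times> J) M') * (\<integral>\<^sup>+ x. (\<Prod>t'\<in>F. h t' x) \<partial>PiM (F \<times> J) M')"
  proof (rule nn_integral_cmult)
    show "(\<lambda>x. \<Prod>t'\<in>F. h t' x) \<in> borel_measurable (PiM (F \<times> J) M')"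
      by (rule borel_measurable_prod_ennreal) (rule hmeas, auto)
  qed
  also have "\<dots> = (\<Prod>t'\<in>insert t F. \<integral>\<^sup>+\<omega>. h t' \<omega> \<partial>PiM ({t'} \<times> J) M')"
    using insert unfolding h_def by simp
  finally show ?case unfolding h_def .
qed



lemma prod_mono_ennreal:
  fixes f g :: "'a \<Rightarrow> ennreal"
  shows "(\<And>i. i \<in> A \<Longrightarrow> f i \<le> g i) \<Longrightarrow> prod f A \<le> prod g A"
  by (induct A rule: infinite_finite_induct) (auto intro!: mult_mono)

lemma bd_div:
  assumes N: "N \<ge> 1" and p: "p \<ge> 1" and B: "B \<ge> 0"
  shows "bd B p N / real N ^ p \<le> 1 + 2 ^ (p - 1) * Kc B p / real N"
proof -
  have Np: "real N ^ p > 0" using N by simp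
  have "(real N + 1) ^ (p - 1) \<le> (2 * real N) ^ (p - 1)"
    by (rule power_mono) (use N in auto)
  also have "\<dots> = 2 ^ (p - 1) * real N ^ (p - 1)" by (simp add: power_mult_distrib)
  finally have a: "Kc B p * (real N + 1) ^ (p - 1) \<le> Kc B p * (2 ^ (p - 1) * real N ^ (p - 1))"
    by (rule mult_left_mono) (use Kc_nonneg[OF B] in auto)
  have eq: "real N ^ p = real N * real N ^ (p - 1)" using p
    by (metis Suc_diff_le diff_Suc_1 power_Suc)
  have "bd B p N / real N ^ p = 1 + Kc B p * (real N + 1) ^ (p - 1) / real N ^ p"
    unfolding bd_def using Np by (simp add: field_simps)
  also have "\<dots> \<le> 1 + Kc B p * (2 ^ (p - 1) * real N ^ (p - 1)) / real N ^ p"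
    using a Np by (simp add: divide_right_mono)
  also have "\<dots> = 1 + 2 ^ (p - 1) * Kc B p / real N"
    unfolding eq using N by (simp add: field_simps)
  finally show ?thesis .
qed

lemma Kc_measurable[measurable]:
  assumes [measurable]: "f \<in> borel_measurable M"
  shows "(\<lambda>x. Kc (f x) j) \<in> borel_measurable M"
  by (induction j) simp_all

lemma tail_pointwise:
  fixes W s :: real and p :: nat
  assumes s: "s > 0" and p: "p \<ge> 1" and W: "W \<ge> s"
  shows "W \<le> s powr (1 - real p) * \<bar>W\<bar> ^ p"
proof -
  obtain q where q: "p = Suc q" using p by (cases p) auto
  have W0: "W > 0" using s W by simp
  have "s ^ q \<le> W ^ q" by (rule power_mono) (use s W in auto)
  then have "s * W * s ^ q \<le> s * W * W ^ q" by (rule mult_left_mono) (use s W0 in auto)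
  then have "W * s ^ p \<le> s * W ^ p" unfolding q by (simp add: ac_simps)
  moreover have "s powr (1 - real p) = s / s ^ p"
    using s by (simp add: powr_diff powr_realpow)
  moreover have sp: "s ^ p > 0" using s by simp
  ultimately have "W \<le> s * W ^ p / s ^ p" by (simp add: field_simps)
  then show ?thesis using \<open>s powr (1 - real p) = s / s ^ p\<close> abs_of_pos[OF W0] by simp
qed



definition Bv :: "nat \<Rightarrow> real measure \<Rightarrow> real" where
  "Bv p m = 1 + enn2real (\<integral>\<^sup>+ y. ennreal (\<bar>y\<bar> ^ p) \<partial>m)"

lemma moment_facts:
  fixes m :: "real measure"
  assumes m: "prob_space m" and sm: "sets m = sets borel" and nn: "AE w in m. w \<ge> 0"
    and int: "integrable m (\<lambda>w. w) \<and> (\<integral>w. w \<partial>m) = 1"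
    and mom: "(\<integral>\<^sup>+ w. ennreal (w ^ p) \<partial>m) < \<infinity>"
  shows "Bv p m \<ge> 1" "(\<integral>\<^sup>+ y. ennreal \<bar>y\<bar> \<partial>m) \<le> 1"
    "\<And>i. i \<le> p \<Longrightarrow> (\<integral>\<^sup>+ y. ennreal (\<bar>y\<bar> ^ i) \<partial>m) \<le> ennreal (Bv p m)"
proof -
  interpret prob_space m by (rule m)
  note [measurable_cong] = sm
  have e1: "(\<integral>\<^sup>+ y. ennreal (\<bar>y\<bar> ^ p) \<partial>m) = (\<integral>\<^sup>+ w. ennreal (w ^ p) \<partial>m)"
    by (rule nn_integral_cong_AE) (use nn in auto)
  then have fin: "(\<integral>\<^sup>+ y. ennreal (\<bar>y\<bar> ^ p) \<partial>m) \<noteq> \<infinity>" using mom by simp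
  show "Bv p m \<ge> 1" unfolding Bv_def by simp
  have "(\<integral>\<^sup>+ y. ennreal \<bar>y\<bar> \<partial>m) = (\<integral>\<^sup>+ y. ennreal y \<partial>m)"
    by (rule nn_integral_cong_AE) (use nn in auto)
  also have "\<dots> = ennreal (\<integral>w. w \<partial>m)"
    by (rule nn_integral_eq_integral) (use int nn in auto)
  finally show "(\<integral>\<^sup>+ y. ennreal \<bar>y\<bar> \<partial>m) \<le> 1" using int by simp
  fix i assume ip: "i \<le> p"
  have "(\<integral>\<^sup>+ y. ennreal (\<bar>y\<bar> ^ i) \<partial>m) \<le> (\<integral>\<^sup>+ y. 1 + ennreal (\<bar>y\<bar> ^ p) \<partial>m)"
  proof (rule nn_integral_mono)
    fix y :: real
    have "\<bar>y\<bar> ^ i \<le> 1 + \<bar>y\<bar> ^ p"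
    proof (cases "\<bar>y\<bar> \<le> 1")
      case True
      then have "\<bar>y\<bar> ^ i \<le> 1" by (simp add: power_le_one)
      then show ?thesis by (smt (verit) zero_le_power abs_ge_zero)
    next
      case False
      then have "\<bar>y\<bar> ^ i \<le> \<bar>y\<bar> ^ p" by (intro power_increasing ip) auto
      then show ?thesis by simp
    qed
    then have "ennreal (\<bar>y\<bar> ^ i) \<le> ennreal (1 + \<bar>y\<bar> ^ p)" by (rule ennreal_leI)
    then show "ennreal (\<bar>y\<bar> ^ i) \<le> 1 + ennreal (\<bar>y\<bar> ^ p)" by (simp add: ennreal_plus)
  qed
  also have "\<dots> = 1 + (\<integral>\<^sup>+ y. ennreal (\<bar>y\<bar> ^ p) \<partial>m)"
    by (subst nn_integral_add) (auto simp: emeasure_space_1)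
  also have "\<dots> = ennreal (Bv p m)"
    unfolding Bv_def using fin by (simp add: ennreal_plus ennreal_enn2real_if)
  finally show "(\<integral>\<^sup>+ y. ennreal (\<bar>y\<bar> ^ i) \<partial>m) \<le> ennreal (Bv p m)" .
qed



lemma block_moment:
  fixes m :: "real measure" and M' :: "nat \<times> nat \<Rightarrow> real measure"
  assumes m: "prob_space m" and sm: "sets m = sets borel" and nn: "AE w in m. w \<ge> 0"
    and int: "integrable m (\<lambda>w. w) \<and> (\<integral>w. w \<partial>m) = 1"
    and mom: "(\<integral>\<^sup>+ w. ennreal (w ^ p) \<partial>m) < \<infinity>"
    and N: "N \<ge> 1" and p: "p \<ge> 2"
    and M': "\<And>k. k \<in> {t} \<times> {..<N} \<Longrightarrow> M' k = m"
  shows "(\<integral>\<^sup>+\<omega>. ennreal (\<bar>(\<Sum>i\<in>{..<N}. \<omega> (t, i)) / real N\<bar> ^ p) \<partial>PiM ({t} \<times> {..<N}) M')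
     \<le> ennreal (1 + 2 ^ (p - 1) * Kc (Bv p m) p / real N)"
proof -
  note mf = moment_facts[OF m sm nn int mom]
  note [measurable_cong] = sm
  have PiM_eq: "PiM ({t} \<times> {..<N}) M' = PiM ({t} \<times> {..<N}) (\<lambda>_. m)"
    by (rule PiM_cong) (use M' in auto)
  have sumeq: "(\<Sum>i\<in>{..<N}. \<omega> (t, i)) = (\<Sum>k\<in>{t} \<times> {..<N}. \<omega> k)" for \<omega> :: "nat \<times> nat \<Rightarrow> real"
  proof -
    have "{t} \<times> {..<N} = Pair t ` {..<N}" by auto
    moreover have "inj_on (Pair t) {..<N}" by (auto simp: inj_on_def)
    ultimately show ?thesis by (simp add: sum.reindex)
  qed
  have Np: "real N ^ p > 0" using N by simp
  have "(\<integral>\<^sup>+\<omega>. ennreal (\<bar>(\<Sum>i\<in>{..<N}. \<omega> (t, i)) / real N\<bar> ^ p) \<partial>PiM ({t} \<times> {..<N}) M')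
      = (\<integral>\<^sup>+\<omega>. ennreal (\<bar>\<Sum>k\<in>{t} \<times> {..<N}. \<omega> k\<bar> ^ p) * ennreal (1 / real N ^ p) \<partial>PiM ({t} \<times> {..<N}) (\<lambda>_. m))"
    unfolding PiM_eq sumeq
    by (rule nn_integral_cong) (simp add: ennreal_mult[symmetric] abs_divide power_divide)
  also have "\<dots> = (\<integral>\<^sup>+\<omega>. ennreal (\<bar>\<Sum>k\<in>{t} \<times> {..<N}. \<omega> k\<bar> ^ p) \<partial>PiM ({t} \<times> {..<N}) (\<lambda>_. m)) * ennreal (1 / real N ^ p)"
    by (rule nn_integral_multc) measurable
  also have "\<dots> \<le> ennreal (bd (Bv p m) p (card ({t} \<times> {..<N}))) * ennreal (1 / real N ^ p)"
  proof (rule mult_right_mono)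
    show "(\<integral>\<^sup>+\<omega>. ennreal (\<bar>\<Sum>k\<in>{t} \<times> {..<N}. \<omega> k\<bar> ^ p) \<partial>PiM ({t} \<times> {..<N}) (\<lambda>_. m))
        \<le> ennreal (bd (Bv p m) p (card ({t} \<times> {..<N})))"
      using sum_moment[OF m sm _ mf(1) mf(2), where J="{t} \<times> {..<N}" and p=p] mf(3) by auto
  qed simp
  also have "\<dots> = ennreal (bd (Bv p m) p N / real N ^ p)"
  proof -
    have "bd (Bv p m) p N \<ge> 0" unfolding bd_def using Kc_nonneg[of "Bv p m" p] mf(1) by simp
    moreover have "card ({t} \<times> {..<N}) = N" by (simp add: card_cartesian_product)
    ultimately show ?thesis by (simp add: ennreal_mult[symmetric] divide_inverse)
  qed
  also have "\<dots> \<le> ennreal (1 + 2 ^ (p - 1) * Kc (Bv p m) p / real N)"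
    by (rule ennreal_leI, rule bd_div) (use N p mf(1) in auto)
  finally show ?thesis .
qed



lemma tilde_bound:
  fixes \<mu> :: "'x \<Rightarrow> nat \<Rightarrow> real measure"
  assumes T: "T \<ge> 1" and p: "p \<ge> 2" and N: "N \<ge> 1" and s: "s > 0"
    and law: "\<And>t. t \<in> {1..T} \<Longrightarrow> prob_space (\<mu> x t)"
    and sets_law: "\<And>t. t \<in> {1..T} \<Longrightarrow> sets (\<mu> x t) = sets borel"
    and nonneg: "\<And>t. t \<in> {1..T} \<Longrightarrow> AE w in \<mu> x t. w \<ge> 0"
    and mean1: "\<And>t. t \<in> {1..T} \<Longrightarrow> integrable (\<mu> x t) (\<lambda>w. w) \<and> (\<integral>w. w \<partial>\<mu> x t) = 1"
    and moment: "\<And>t. t \<in> {1..T} \<Longrightarrow> (\<integral>\<^sup>+ w. ennreal (w ^ p) \<partial>\<mu> x t) < \<infinity>"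
  shows "tilde_pi \<mu> T N x {s..} \<le> ennreal (s powr (1 - real p))
            * ennreal (\<Prod>t\<in>{1..T}. 1 + 2 ^ (p - 1) * Kc (Bv p (\<mu> x t)) p / real N)"
proof -
  define M' where "M' k = (if fst k \<in> {1..T} then \<mu> x (fst k) else return borel 0)" for k :: "nat \<times> nat"
  have ps: "prob_space (M' k)" for k
    unfolding M'_def using law by (auto intro: prob_space_return)
  have sM: "sets (M' k) = sets borel" for k
    unfolding M'_def using sets_law by auto
  note [measurable_cong] = sM
  define I where "I = {1..T} \<times> {..<N}"
  define P where "P = PiM I M'"
  have P_eq: "PiM I (\<lambda>(t, i). \<mu> x t) = P"
    unfolding P_def I_def by (rule PiM_cong) (auto simp: M'_def)
  define A where "A t \<omega> = (\<Sum>i\<in>{..<N}. \<omega> (t, i)) / real N" for t and \<omega> :: "nat \<times> nat \<Rightarrow> real"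
  have comp: "(\<lambda>\<omega>. \<omega> (t, i)) \<in> borel_measurable P" if "t \<in> {1..T}" "i < N" for t i
    unfolding P_def by measurable (use that in \<open>auto simp: I_def\<close>)
  have Ameas: "A t \<in> borel_measurable P" if "t \<in> {1..T}" for t
    unfolding A_def
    by (intro borel_measurable_divide borel_measurable_sum comp that borel_measurable_const) auto
  have Wdef: "W_prod T N = (\<lambda>\<omega>. \<Prod>t\<in>{1..T}. A t \<omega>)"
    unfolding W_prod_def A_def by (rule ext) simp
  have Wmeas: "W_prod T N \<in> borel_measurable P"
    unfolding Wdef by (rule borel_measurable_prod) (rule Ameas)
  have "tilde_pi \<mu> T N x {s..} = (\<integral>\<^sup>+ w. ennreal w * indicator {s..} w \<partial>distr P borel (W_prod T N))"
    unfolding tilde_pi_def Q_law_def I_def[symmetric] P_eq ..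
  also have "\<dots> = (\<integral>\<^sup>+ \<omega>. ennreal (W_prod T N \<omega>) * indicator {s..} (W_prod T N \<omega>) \<partial>P)"
    by (rule nn_integral_distr[OF Wmeas]) simp
  also have "\<dots> \<le> (\<integral>\<^sup>+ \<omega>. ennreal (s powr (1 - real p)) * (\<Prod>t\<in>{1..T}. ennreal (\<bar>A t \<omega>\<bar> ^ p)) \<partial>P)"
  proof (rule nn_integral_mono)
    fix \<omega>
    show "ennreal (W_prod T N \<omega>) * indicator {s..} (W_prod T N \<omega>)
        \<le> ennreal (s powr (1 - real p)) * (\<Prod>t\<in>{1..T}. ennreal (\<bar>A t \<omega>\<bar> ^ p))"
    proof (cases "W_prod T N \<omega> \<ge> s")
      case True
      have "W_prod T N \<omega> \<le> s powr (1 - real p) * \<bar>W_prod T N \<omega>\<bar> ^ p"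
        by (rule tail_pointwise) (use s p True in auto)
      also have "\<bar>W_prod T N \<omega>\<bar> ^ p = (\<Prod>t\<in>{1..T}. \<bar>A t \<omega>\<bar> ^ p)"
        unfolding Wdef by (simp add: abs_prod prod_power_distrib)
      finally have "ennreal (W_prod T N \<omega>) \<le> ennreal (s powr (1 - real p) * (\<Prod>t\<in>{1..T}. \<bar>A t \<omega>\<bar> ^ p))"
        by (rule ennreal_leI)
      also have "\<dots> = ennreal (s powr (1 - real p)) * (\<Prod>t\<in>{1..T}. ennreal (\<bar>A t \<omega>\<bar> ^ p))"
        by (simp add: ennreal_mult prod_ennreal prod_nonneg)
      finally show ?thesis using True by simp
    qed simp
  qed
  also have "\<dots> = ennreal (s powr (1 - real p)) * (\<integral>\<^sup>+ \<omega>. (\<Prod>t\<in>{1..T}. ennreal (\<bar>A t \<omega>\<bar> ^ p)) \<partial>P)"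
  proof (rule nn_integral_cmult)
    show "(\<lambda>\<omega>. \<Prod>t\<in>{1..T}. ennreal (\<bar>A t \<omega>\<bar> ^ p)) \<in> borel_measurable P"
    proof (rule borel_measurable_prod_ennreal)
      have g: "(\<lambda>a::real. ennreal (\<bar>a\<bar> ^ p)) \<in> borel_measurable borel" by measurable
      fix t assume "t \<in> {1..T}"
      then show "(\<lambda>\<omega>. ennreal (\<bar>A t \<omega>\<bar> ^ p)) \<in> borel_measurable P"
        using measurable_compose[OF Ameas g] by simp
    qed
  qed
  also have "(\<integral>\<^sup>+ \<omega>. (\<Prod>t\<in>{1..T}. ennreal (\<bar>A t \<omega>\<bar> ^ p)) \<partial>P)
      = (\<Prod>t\<in>{1..T}. \<integral>\<^sup>+\<omega>. ennreal (\<bar>(\<Sum>i\<in>{..<N}. \<omega> (t, i)) / real N\<bar> ^ p) \<partial>PiM ({t} \<times> {..<N}) M')"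
    unfolding P_def I_def A_def by (rule block_prod[OF ps sM]) auto
  also have "\<dots> \<le> (\<Prod>t\<in>{1..T}. ennreal (1 + 2 ^ (p - 1) * Kc (Bv p (\<mu> x t)) p / real N))"
  proof (rule prod_mono_ennreal)
    fix t assume t: "t \<in> {1..T}"
    show "(\<integral>\<^sup>+\<omega>. ennreal (\<bar>(\<Sum>i\<in>{..<N}. \<omega> (t, i)) / real N\<bar> ^ p) \<partial>PiM ({t} \<times> {..<N}) M')
        \<le> ennreal (1 + 2 ^ (p - 1) * Kc (Bv p (\<mu> x t)) p / real N)"
      by (rule block_moment[OF law[OF t] sets_law[OF t] nonneg[OF t] mean1[OF t] moment[OF t] N p])
        (use t in \<open>auto simp: M'_def\<close>)
  qed
  also have "\<dots> = ennreal (\<Prod>t\<in>{1..T}. 1 + 2 ^ (p - 1) * Kc (Bv p (\<mu> x t)) p / real N)"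
  proof (rule prod_ennreal)
    fix t assume t: "t \<in> {1..T}"
    have "Bv p (\<mu> x t) \<ge> 1" by (rule moment_facts(1)[OF law[OF t] sets_law[OF t] nonneg[OF t] mean1[OF t] moment[OF t]])
    then have "Kc (Bv p (\<mu> x t)) p \<ge> 0" by (intro Kc_nonneg) simp
    then show "0 \<le> 1 + 2 ^ (p - 1) * Kc (Bv p (\<mu> x t)) p / real N" by simp
  qed
  finally show ?thesis by (simp add: mult_left_mono)
qed



theorem proposition49:
  fixes \<pi> :: "'x measure" and \<mu> :: "'x \<Rightarrow> nat \<Rightarrow> real measure"
    and T :: nat and p :: nat
  assumes "prob_space \<pi>"
    and "T \<ge> 1"
    and "p \<ge> 2"
    and kernel: "\<And>t. t \<in> {1..T} \<Longrightarrow> (\<lambda>x. \<mu> x t) \<in> measurable \<pi> (subprob_algebra borel)"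
    and law: "\<And>x t. x \<in> space \<pi> \<Longrightarrow> t \<in> {1..T} \<Longrightarrow> prob_space (\<mu> x t)"
    and sets_law: "\<And>x t. x \<in> space \<pi> \<Longrightarrow> t \<in> {1..T} \<Longrightarrow> sets (\<mu> x t) = sets borel"
    and nonneg: "\<And>x t. x \<in> space \<pi> \<Longrightarrow> t \<in> {1..T} \<Longrightarrow> AE w in \<mu> x t. w \<ge> 0"
    and mean1: "\<And>x t. x \<in> space \<pi> \<Longrightarrow> t \<in> {1..T} \<Longrightarrow>
                  integrable (\<mu> x t) (\<lambda>w. w) \<and> (\<integral>w. w \<partial>\<mu> x t) = 1"
    and moment: "\<And>x t. x \<in> space \<pi> \<Longrightarrow> t \<in> {1..T} \<Longrightarrow>
                  (\<integral>\<^sup>+ w. ennreal (w ^ p) \<partial>\<mu> x t) < \<infinity>"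
  shows "\<exists>M :: 'x \<Rightarrow> real. M \<in> borel_measurable \<pi> \<and> (\<forall>x \<in> space \<pi>. M x > 0) \<and>
           (\<forall>(N :: nat) (\<alpha> :: real). \<alpha> > 0 \<and> real N \<ge> \<alpha> * real T + 1/2 + sqrt (\<alpha> * real T) \<longrightarrow>
              (\<forall>s :: real. s > 0 \<longrightarrow>
                 (\<integral>\<^sup>+ x. tilde_pi \<mu> T N x {s..} \<partial>\<pi>)
                 \<le> ennreal (s powr (1 - real p)) * (\<integral>\<^sup>+ x. ennreal (exp (M x / \<alpha>)) \<partial>\<pi>)))"
proof -
  define c where "c x t = 2 ^ (p - 1) * Kc (Bv p (\<mu> x t)) p" for x t
  define M where "M x = 1 + (\<Sum>t\<in>{1..T}. c x t)" for x
  have c_nn: "c x t \<ge> 0" for x t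
  proof -
    have "Bv p (\<mu> x t) \<ge> 0" unfolding Bv_def by simp
    then show ?thesis unfolding c_def using Kc_nonneg by simp
  qed
  have Mpos: "M x \<ge> 1" for x unfolding M_def using c_nn by (simp add: sum_nonneg)
  have Mmeas: "M \<in> borel_measurable \<pi>"
  proof -
    have g: "(\<lambda>y::real. ennreal (\<bar>y\<bar> ^ p)) \<in> borel_measurable borel" by measurable
    have "c' \<in> borel_measurable \<pi>" if "t \<in> {1..T}" and c': "c' = (\<lambda>x. c x t)" for t c'
    proof -
      have [measurable]: "(\<lambda>x. \<integral>\<^sup>+ y. ennreal (\<bar>y\<bar> ^ p) \<partial>\<mu> x t) \<in> borel_measurable \<pi>"
        using measurable_compose[OF kernel[OF that(1)] nn_integral_measurable_subprob_algebra[OF g]] by simp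
      show ?thesis unfolding c' c_def Bv_def by measurable
    qed
    then show ?thesis unfolding M_def
      by (intro borel_measurable_add borel_measurable_const borel_measurable_sum) auto
  qed
  show ?thesis
  proof (intro exI conjI ballI allI impI)
    show "M \<in> borel_measurable \<pi>" by (rule Mmeas)
    show "0 < M x" for x using Mpos[of x] by simp
    fix N :: nat and \<alpha> s :: real
    assume h: "0 < \<alpha> \<and> \<alpha> * real T + 1 / 2 + sqrt (\<alpha> * real T) \<le> real N" and s: "0 < s"
    have aT: "\<alpha> \<le> \<alpha> * real T" using h \<open>T \<ge> 1\<close> by simp
    have sq: "sqrt (\<alpha> * real T) \<ge> 0" using h by simp
    have aN: "\<alpha> \<le> real N" using h aT sq by linarith
    have "real N > 0" using h aT sq by linarith
    then have N1: "N \<ge> 1" by simp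
    have "(\<integral>\<^sup>+ x. tilde_pi \<mu> T N x {s..} \<partial>\<pi>)
        \<le> (\<integral>\<^sup>+ x. ennreal (s powr (1 - real p)) * ennreal (exp (M x / \<alpha>)) \<partial>\<pi>)"
    proof (rule nn_integral_mono)
      fix x assume x: "x \<in> space \<pi>"
      have "tilde_pi \<mu> T N x {s..} \<le> ennreal (s powr (1 - real p))
            * ennreal (\<Prod>t\<in>{1..T}. 1 + c x t / real N)"
        unfolding c_def
        by (rule tilde_bound[where \<mu>=\<mu> and x=x, OF \<open>T \<ge> 1\<close> \<open>p \<ge> 2\<close> N1 s law[OF x] sets_law[OF x] nonneg[OF x] mean1[OF x] moment[OF x]])
      also have "(\<Prod>t\<in>{1..T}. 1 + c x t / real N) \<le> exp (M x / \<alpha>)"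
      proof -
        have "(\<Prod>t\<in>{1..T}. 1 + c x t / real N) \<le> (\<Prod>t\<in>{1..T}. exp (c x t / real N))"
          by (rule prod_mono) (use c_nn in \<open>auto intro: add_nonneg_nonneg\<close>)
        also have "\<dots> = exp (\<Sum>t\<in>{1..T}. c x t / real N)" by (simp add: exp_sum)
        also have "\<dots> \<le> exp (M x / \<alpha>)"
        proof -
          have "(\<Sum>t\<in>{1..T}. c x t / real N) = (\<Sum>t\<in>{1..T}. c x t) / real N"
            by (simp add: sum_divide_distrib)
          also have "\<dots> \<le> (\<Sum>t\<in>{1..T}. c x t) / \<alpha>"
            by (rule divide_left_mono) (use aN h c_nn in \<open>auto intro: sum_nonneg\<close>)
          also have "\<dots> \<le> M x / \<alpha>"
            unfolding M_def by (rule divide_right_mono) (use h in auto)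
          finally show ?thesis by simp
        qed
        finally show ?thesis .
      qed
      then have "ennreal (\<Prod>t\<in>{1..T}. 1 + c x t / real N) \<le> ennreal (exp (M x / \<alpha>))"
        by (rule ennreal_leI)
      then have "ennreal (s powr (1 - real p)) * ennreal (\<Prod>t\<in>{1..T}. 1 + c x t / real N)
          \<le> ennreal (s powr (1 - real p)) * ennreal (exp (M x / \<alpha>))"
        by (rule mult_left_mono) simp
      finally show "tilde_pi \<mu> T N x {s..} \<le> ennreal (s powr (1 - real p)) * ennreal (exp (M x / \<alpha>))" .
    qed
    also have "\<dots> = ennreal (s powr (1 - real p)) * (\<integral>\<^sup>+ x. ennreal (exp (M x / \<alpha>)) \<partial>\<pi>)"
      by (rule nn_integral_cmult) (use Mmeas in measurable)
    finally show "(\<integral>\<^sup>+ x. tilde_pi \<mu> T N x {s..} \<partial>\<pi>)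
        \<le> ennreal (s powr (1 - real p)) * (\<integral>\<^sup>+ x. ennreal (exp (M x / \<alpha>)) \<partial>\<pi>)" .
  qed
qed

end
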